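(* In the setting described in the context, as $n\to\infty$, \[ (1-\rho^{(n)})\,\mathbb{E}[N^{(n)}]=\Theta(1)\quad\text{and}\quad\mathbb{E}[I^{(n)}]=\Theta(1). \]
   Context: For each $n\geq1$: a single-server queue with unit service speed; i.i.d. interarrival times $A^{(n)}_i$ and i.i.d. job sizes $B^{(n)}_i$ (independent, positive), $A^{(n)}=A^{(n)}_1$, $B^{(n)}=B^{(n)}_1$, load $\rho^{(n)}=\mathbb{E}[B^{(n)}]/\mathbb{E}[A^{(n)}]$. Standing assumptions: constants $\rho_0\in(0,1)$, $A_{\min}>0$ independent of $n$ with $\rho_0A_{\min}\leq\rho_0\mathbb{E}[A^{(n)}]\leq\mathbb{E}[B^{(n)}]<\mathbb{E}[A^{(n)}]$; $\rho^{(n)}\to1$; $A^{(n)}$ has finite variance and $\limsup_n\mathbb{E}[(A^{(n)})^2]<\infty$; constants $\delta,\gamma>0$ independent of $n$ with $\mathbb{P}(B^{(n)}-A^{(n)}\geq\delta)\geq\gamma$. Let $S_m=\sum_{i=1}^m(B^{(n)}_i-A^{(n)}_i)$. $N^{(n)}=\inf\{m\geq1:S_m\leq0\}$ is the number of jobs in a generic busy period (started by an arrival to an empty system, ending when the system next empties), and $I^{(n)}=-S_{N^{(n)}}$ is the duration of the idle period following it (time from the end of a busy period until the next arrival). *)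

theory Defs
  imports "HOL-Probability.Probability"
begin

text \<open>Random walk S_m = sum_{i=1}^m (B_i - A_i); here jobs are indexed from 0,
  so S_m = sum over i < m.\<close>
definition walk :: "(nat \<Rightarrow> 'a \<Rightarrow> real) \<Rightarrow> (nat \<Rightarrow> 'a \<Rightarrow> real) \<Rightarrow> nat \<Rightarrow> 'a \<Rightarrow> real" where
  "walk A B m \<omega> = (\<Sum>i<m. B i \<omega> - A i \<omega>)"

definition busy_jobs :: "(nat \<Rightarrow> 'a \<Rightarrow> real) \<Rightarrow> (nat \<Rightarrow> 'a \<Rightarrow> real) \<Rightarrow> 'a \<Rightarrow> enat" where
  "busy_jobs A B \<omega> =
     (if \<exists>m\<ge>1. walk A B m \<omega> \<le> 0 then enat (LEAST m. m \<ge> 1 \<and> walk A B m \<omega> \<le> 0) else \<infinity>)"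

text \<open>Idle period I = - S_N (set to 0 on the event N = infinity, which is null).\<close>
definition idle_time :: "(nat \<Rightarrow> 'a \<Rightarrow> real) \<Rightarrow> (nat \<Rightarrow> 'a \<Rightarrow> real) \<Rightarrow> 'a \<Rightarrow> real" where
  "idle_time A B \<omega> = (case busy_jobs A B \<omega> of enat m \<Rightarrow> - walk A B m \<omega> | \<infinity> \<Rightarrow> 0)"

end

theory Submission
  imports Defs
begin

lemma (in prob_space) indep_var_nn_mult:
  assumes ind: "indep_var S X T Y" and f[measurable]: "f \<in> borel_measurable S" and g[measurable]: "g \<in> borel_measurable T"
  shows "(\<integral>\<^sup>+\<omega>. f (X \<omega>) * g (Y \<omega>) \<partial>M) = (\<integral>\<^sup>+\<omega>. f (X \<omega>) \<partial>M) * (\<integral>\<^sup>+\<omega>. g (Y \<omega>) \<partial>M)"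
proof -
  have rv: "random_variable S X" "random_variable T Y" and
    eq: "distr M S X \<Otimes>\<^sub>M distr M T Y = distr M (S \<Otimes>\<^sub>M T) (\<lambda>x. (X x, Y x))"
    using ind unfolding indep_var_distribution_eq by auto
  note [measurable] = rv
  interpret X: prob_space "distr M S X" by (rule prob_space_distr) fact
  interpret Y: prob_space "distr M T Y" by (rule prob_space_distr) fact
  interpret XY: pair_sigma_finite "distr M S X" "distr M T Y" ..
  have "(\<integral>\<^sup>+\<omega>. f (X \<omega>) * g (Y \<omega>) \<partial>M) = (\<integral>\<^sup>+z. f (fst z) * g (snd z) \<partial>distr M (S \<Otimes>\<^sub>M T) (\<lambda>x. (X x, Y x)))"
    by (subst nn_integral_distr) auto
  also have "\<dots> = (\<integral>\<^sup>+z. f (fst z) * g (snd z) \<partial>(distr M S X \<Otimes>\<^sub>M distr M T Y))"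
    by (simp add: eq)
  also have "\<dots> = (\<integral>\<^sup>+x. \<integral>\<^sup>+y. f x * g y \<partial>distr M T Y \<partial>distr M S X)"
    by (subst Y.nn_integral_fst[symmetric]) auto
  also have "\<dots> = (\<integral>\<^sup>+x. f x * (\<integral>\<^sup>+y. g y \<partial>distr M T Y) \<partial>distr M S X)"
    by (subst nn_integral_cmult) auto
  also have "\<dots> = (\<integral>\<^sup>+x. f x \<partial>distr M S X) * (\<integral>\<^sup>+y. g y \<partial>distr M T Y)"
    by (subst nn_integral_multc) auto
  also have "\<dots> = (\<integral>\<^sup>+\<omega>. f (X \<omega>) \<partial>M) * (\<integral>\<^sup>+\<omega>. g (Y \<omega>) \<partial>M)"
    by (simp add: nn_integral_distr)
  finally show ?thesis .
qed

lemma ennreal_le_suminf: "(f n :: ennreal) \<le> suminf f"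
  using sum_le_suminf[of f "{n}"] by (simp add: summableI)

lemma floor_bounds:
  assumes "0 \<le> x" "0 < (d::real)"
  shows "real (nat \<lfloor>x / d\<rfloor>) * d \<le> x" "x < real (nat \<lfloor>x / d\<rfloor>) * d + d"
proof -
  have e: "real (nat \<lfloor>x / d\<rfloor>) = of_int \<lfloor>x / d\<rfloor>" using assms by simp
  have "of_int \<lfloor>x / d\<rfloor> \<le> x / d" by simp
  then show "real (nat \<lfloor>x / d\<rfloor>) * d \<le> x" using assms e by (simp add: le_divide_eq)
  have "x / d < of_int \<lfloor>x / d\<rfloor> + 1" by linarith
  then show "x < real (nat \<lfloor>x / d\<rfloor>) * d + d" using assms e by (simp add: divide_less_eq algebra_simps)
qed

locale queue = prob_space M for M :: "'a measure" +
  fixes A B :: "nat \<Rightarrow> 'a \<Rightarrow> real" and \<delta> \<gamma> :: real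
  assumes indep: "indep_vars (\<lambda>_. borel) (\<lambda>k. case k of Inl i \<Rightarrow> A i | Inr i \<Rightarrow> B i) (UNIV :: (nat+nat) set)"
  and A_id: "\<And>i. distr M borel (A i) = distr M borel (A 0)"
  and B_id: "\<And>i. distr M borel (B i) = distr M borel (B 0)"
  and A_pos: "\<And>i \<omega>. \<omega> \<in> space M \<Longrightarrow> A i \<omega> > 0"
  and B_pos: "\<And>i \<omega>. \<omega> \<in> space M \<Longrightarrow> B i \<omega> > 0"
  and A_int: "integrable M (A 0)"
  and B_int: "integrable M (B 0)"
  and EBA: "expectation (B 0) < expectation (A 0)"
  and A_sq: "integrable M (\<lambda>\<omega>. (A 0 \<omega>)\<^sup>2)"
  and dg: "\<delta> > 0" "\<gamma> > 0"
  and jump: "prob {\<omega> \<in> space M. B 0 \<omega> - A 0 \<omega> \<ge> \<delta>} \<ge> \<gamma>"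
begin

definition Z where "Z = (\<lambda>k. case k of Inl i \<Rightarrow> A i | Inr i \<Rightarrow> B i)"
definition P where "P j \<omega> = (A j \<omega>, B j \<omega>)"

lemma Z_rv: "Z k \<in> borel_measurable M"
  using indep unfolding indep_vars_def Z_def by auto

lemma A_meas[measurable]: "A i \<in> borel_measurable M"
  using Z_rv[of "Inl i"] by (simp add: Z_def)
lemma B_meas[measurable]: "B i \<in> borel_measurable M"
  using Z_rv[of "Inr i"] by (simp add: Z_def)
abbreviation BB where "BB \<equiv> (borel \<Otimes>\<^sub>M borel :: (real \<times> real) measure)"
lemma P_meas[measurable]: "P i \<in> measurable M BB"
  unfolding P_def by measurable

lemma indep_Z: "indep_vars (\<lambda>_. borel) Z UNIV"
  using indep unfolding Z_def .

lemma indep_P: "indep_vars (\<lambda>_. borel \<Otimes>\<^sub>M borel) P UNIV"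
proof -
  have 1: "indep_vars (\<lambda>j. PiM {Inl j, Inr j} (\<lambda>_. borel)) (\<lambda>j \<omega>. restrict (\<lambda>i. Z i \<omega>) {Inl j, Inr j}) (UNIV :: nat set)"
    by (rule indep_vars_restrict[OF indep_Z]) (auto simp: disjoint_family_on_def)
  have 2: "indep_vars (\<lambda>_. borel \<Otimes>\<^sub>M borel) (\<lambda>j \<omega>. (\<lambda>v. (v (Inl j), v (Inr j))) (restrict (\<lambda>i. Z i \<omega>) {Inl j, Inr j})) (UNIV :: nat set)"
    by (rule indep_vars_compose2[OF 1]) measurable
  show ?thesis
    by (rule indep_vars_cong[THEN iffD1, OF _ _ _ 2]) (auto simp: P_def Z_def fun_eq_iff)
qed

definition V where "V n \<omega> = restrict (\<lambda>i. P i \<omega>) {..<n}"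

lemma V_meas[measurable]: "V n \<in> measurable M (PiM {..<n} (\<lambda>_. BB))"
  unfolding V_def by measurable

lemma indep_past: "indep_var (PiM {..<n} (\<lambda>_. BB)) (V n) (PiM {n} (\<lambda>_. BB)) (\<lambda>\<omega>. restrict (\<lambda>i. P i \<omega>) {n})"
  unfolding V_def by (rule indep_var_restrict[OF indep_P]) auto

lemma indep_AB: "indep_var borel (A n) borel (B n)"
proof -
  have 1: "indep_var (PiM {Inl n} (\<lambda>_. borel)) (\<lambda>\<omega>. restrict (\<lambda>i. Z i \<omega>) {Inl n}) (PiM {Inr n} (\<lambda>_. borel)) (\<lambda>\<omega>. restrict (\<lambda>i. Z i \<omega>) {Inr n})"
    by (rule indep_var_restrict[OF indep_Z]) auto
  have 2: "indep_var borel ((\<lambda>v. v (Inl n)) \<circ> (\<lambda>\<omega>. restrict (\<lambda>i. Z i \<omega>) {Inl n})) borel ((\<lambda>v. v (Inr n)) \<circ> (\<lambda>\<omega>. restrict (\<lambda>i. Z i \<omega>) {Inr n}))"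
    by (rule indep_var_compose[OF 1]) auto
  then show ?thesis by (simp add: Z_def comp_def)
qed

lemma P_id: "distr M BB (P n) = distr M BB (P 0)"
proof -
  have "distr M BB (P n) = distr M borel (A n) \<Otimes>\<^sub>M distr M borel (B n)"
    using indep_AB[of n] unfolding indep_var_distribution_eq P_def by simp
  also have "\<dots> = distr M borel (A 0) \<Otimes>\<^sub>M distr M borel (B 0)"
    by (simp only: A_id[of n] B_id[of n])
  also have "\<dots> = distr M BB (P 0)"
    using indep_AB[of 0] unfolding indep_var_distribution_eq P_def by simp
  finally show ?thesis .
qed

lemma P_nn_id:
  assumes [measurable]: "g \<in> borel_measurable BB"
  shows "(\<integral>\<^sup>+\<omega>. g (P n \<omega>) \<partial>M) = (\<integral>\<^sup>+\<omega>. g (P 0 \<omega>) \<partial>M)"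
proof -
  have "(\<integral>\<^sup>+\<omega>. g (P n \<omega>) \<partial>M) = (\<integral>\<^sup>+x. g x \<partial>distr M BB (P n))"
    by (simp add: nn_integral_distr)
  also have "\<dots> = (\<integral>\<^sup>+x. g x \<partial>distr M BB (P 0))" by (simp add: P_id[of n])
  also have "\<dots> = (\<integral>\<^sup>+\<omega>. g (P 0 \<omega>) \<partial>M)" by (simp add: nn_integral_distr)
  finally show ?thesis .
qed

lemma past_mult:
  assumes [measurable]: "f \<in> borel_measurable (PiM {..<n} (\<lambda>_. BB))" "g \<in> borel_measurable BB"
  shows "(\<integral>\<^sup>+\<omega>. f (V n \<omega>) * g (P n \<omega>) \<partial>M) = (\<integral>\<^sup>+\<omega>. f (V n \<omega>) \<partial>M) * (\<integral>\<^sup>+\<omega>. g (P 0 \<omega>) \<partial>M)"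
proof -
  have gm: "(\<lambda>v. g (v n)) \<in> borel_measurable (PiM {n} (\<lambda>_. BB))" by measurable
  show ?thesis
    using indep_var_nn_mult[OF indep_past assms(1) gm] P_nn_id[OF assms(2), of n] by simp
qed

definition rev_vec :: "nat \<Rightarrow> (nat \<Rightarrow> real \<times> real) \<Rightarrow> (nat \<Rightarrow> real \<times> real)" where
  "rev_vec n v = (\<lambda>i\<in>{..<n}. v (n - 1 - i))"

lemma reversal:
  assumes f[measurable]: "f \<in> borel_measurable (PiM {..<n} (\<lambda>_. BB))"
  shows "(\<integral>\<^sup>+\<omega>. f (V n \<omega>) \<partial>M) = (\<integral>\<^sup>+\<omega>. f (rev_vec n (V n \<omega>)) \<partial>M)"
proof (cases "n = 0")
  case True
  then show ?thesis by (simp add: V_def rev_vec_def restrict_def emeasure_space_1)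
next
  case False
  let ?Q = "distr M BB (P 0)"
  have rvm[measurable]: "rev_vec n \<in> measurable (PiM {..<n} (\<lambda>_. BB)) (PiM {..<n} (\<lambda>_. BB))"
    unfolding rev_vec_def by measurable
  have d: "distr M (PiM {..<n} (\<lambda>_. BB)) (V n) = PiM {..<n} (\<lambda>_. ?Q)"
  proof -
    have "indep_vars (\<lambda>_. BB) P {..<n}" using indep_vars_subset[OF indep_P] by auto
    then have "distr M (PiM {..<n} (\<lambda>_. BB)) (\<lambda>x. \<lambda>i\<in>{..<n}. P i x) = PiM {..<n} (\<lambda>i. distr M BB (P i))"
      using False by (subst (asm) indep_vars_iff_distr_eq_PiM') auto
    moreover have "PiM {..<n} (\<lambda>i. distr M BB (P i)) = PiM {..<n} (\<lambda>_. ?Q)"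
      by (rule PiM_cong) (rule refl, rule P_id)
    ultimately show ?thesis unfolding V_def by simp
  qed
  interpret Qp: prob_space ?Q by (rule prob_space_distr) simp
  have r: "distr (PiM {..<n} (\<lambda>_. ?Q)) (PiM {..<n} (\<lambda>_. ?Q)) (rev_vec n) = PiM {..<n} (\<lambda>_. ?Q)"
    unfolding rev_vec_def
  proof (rule distr_PiM_reindex)
    show "inj_on (\<lambda>i. n - 1 - i) {..<n}" by (auto simp: inj_on_def)
  qed (auto simp: Qp.prob_space_axioms)
  have fQ[measurable]: "f \<in> borel_measurable (PiM {..<n} (\<lambda>_. ?Q))"
    unfolding d[symmetric] by simp
  have rQ[measurable]: "rev_vec n \<in> measurable (PiM {..<n} (\<lambda>_. ?Q)) (PiM {..<n} (\<lambda>_. ?Q))"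
    unfolding d[symmetric] by simp
  have "(\<integral>\<^sup>+\<omega>. f (V n \<omega>) \<partial>M) = (\<integral>\<^sup>+v. f v \<partial>PiM {..<n} (\<lambda>_. ?Q))"
    by (subst d[symmetric], subst nn_integral_distr) auto
  also have "\<dots> = (\<integral>\<^sup>+v. f v \<partial>distr (PiM {..<n} (\<lambda>_. ?Q)) (PiM {..<n} (\<lambda>_. ?Q)) (rev_vec n))"
    by (simp add: r)
  also have "\<dots> = (\<integral>\<^sup>+v. f (rev_vec n v) \<partial>PiM {..<n} (\<lambda>_. ?Q))"
    by (subst nn_integral_distr) auto
  also have "\<dots> = (\<integral>\<^sup>+\<omega>. f (rev_vec n (V n \<omega>)) \<partial>M)"
    by (subst d[symmetric], subst nn_integral_distr) auto
  finally show ?thesis .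
qed

definition S where "S k \<omega> = walk A B k \<omega>"
lemma S_meas[measurable]: "S k \<in> borel_measurable M" unfolding S_def walk_def by measurable
definition alive where "alive n \<omega> \<longleftrightarrow> (\<forall>k\<in>{1..n}. S k \<omega> > 0)"
definition recd where "recd n \<omega> \<longleftrightarrow> (\<forall>j\<in>{..<n}. S j \<omega> < S n \<omega>)"
lemma alive_pred[measurable]: "Measurable.pred M (alive n)" unfolding alive_def by measurable
lemma recd_pred[measurable]: "Measurable.pred M (recd n)" unfolding recd_def by measurable

definition sv :: "(nat \<Rightarrow> real \<times> real) \<Rightarrow> nat \<Rightarrow> real" where "sv v k = (\<Sum>i<k. snd (v i) - fst (v i))"

lemma sv_V: "k \<le> n \<Longrightarrow> sv (V n \<omega>) k = S k \<omega>"
  unfolding sv_def S_def walk_def V_def P_def by (intro sum.cong) auto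

lemma comp_meas[measurable]: "(\<lambda>v. v i) \<in> measurable (PiM {..<n} (\<lambda>_. BB)) BB"
proof (cases "i < n")
  case True then show ?thesis by (intro measurable_component_singleton) auto
next
  case False
  have "(\<lambda>_. undefined) \<in> measurable (PiM {..<n} (\<lambda>_. BB)) BB" by (auto intro!: measurable_const simp: space_pair_measure)
  then show ?thesis
    by (rule measurable_cong[THEN iffD1, rotated]) (use False in \<open>auto simp: space_PiM PiE_def extensional_def\<close>)
qed

lemma sv_meas[measurable]: "(\<lambda>v. sv v k) \<in> borel_measurable (PiM {..<n} (\<lambda>_. BB))"
  unfolding sv_def by measurable

lemma rev_sum: "(k::nat) \<le> n \<Longrightarrow> (\<Sum>i<k. f (n - 1 - i)) = (\<Sum>i<n. f i) - (\<Sum>i<n-k. (f i :: real))"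
proof (induction k)
  case 0 then show ?case by simp
next
  case (Suc k)
  have e: "n - k = Suc (n - Suc k)" using Suc.prems by simp
  have "(\<Sum>i<Suc k. f (n - 1 - i)) = (\<Sum>i<k. f (n - 1 - i)) + f (n - 1 - k)" by simp
  also have "\<dots> = (\<Sum>i<n. f i) - (\<Sum>i<n-k. f i) + f (n - Suc k)" using Suc by simp
  also have "(\<Sum>i<n-k. f i) = (\<Sum>i<n - Suc k. f i) + f (n - Suc k)" by (simp add: e)
  finally show ?case by simp
qed

lemma sv_rev: "k \<le> n \<Longrightarrow> sv (rev_vec n v) k = sv v n - sv v (n - k)"
proof -
  assume k: "k \<le> n"
  have "sv (rev_vec n v) k = (\<Sum>i<k. (\<lambda>j. snd (v j) - fst (v j)) (n - 1 - i))"
    unfolding sv_def rev_vec_def using k by (intro sum.cong) auto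
  also have "\<dots> = sv v n - sv v (n - k)" unfolding sv_def by (rule rev_sum[OF k])
  finally show ?thesis .
qed

lemma ball_rev: "(\<forall>k\<in>{1..n}. 0 < (s (n::nat) :: real) - s (n - k)) \<longleftrightarrow> (\<forall>j\<in>{..<n}. s j < s n)"
proof
  assume h: "\<forall>k\<in>{1..n}. 0 < s n - s (n - k)"
  show "\<forall>j\<in>{..<n}. s j < s n"
  proof
    fix j assume "j \<in> {..<n}"
    then have "n - j \<in> {1..n}" "n - (n - j) = j" by auto
    then show "s j < s n" using h by force
  qed
next
  assume h: "\<forall>j\<in>{..<n}. s j < s n"
  show "\<forall>k\<in>{1..n}. 0 < s n - s (n - k)"
  proof
    fix k assume "k \<in> {1..n}"
    then have "n - k \<in> {..<n}" by auto
    then show "0 < s n - s (n - k)" using h by force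
  qed
qed

lemma alive_rev_eq:
  assumes J[measurable]: "J \<in> sets borel"
  shows "emeasure M {\<omega>\<in>space M. alive n \<omega> \<and> S n \<omega> \<in> J} = emeasure M {\<omega>\<in>space M. recd n \<omega> \<and> S n \<omega> \<in> J}"
proof -
  define fT where "fT v = (if (\<forall>k\<in>{1..n}. 0 < sv v k) \<and> sv v n \<in> J then 1 else 0 :: ennreal)" for v
  have fT_m[measurable]: "fT \<in> borel_measurable (PiM {..<n} (\<lambda>_. BB))" unfolding fT_def by measurable
  have "emeasure M {\<omega>\<in>space M. alive n \<omega> \<and> S n \<omega> \<in> J} = (\<integral>\<^sup>+\<omega>. indicator {\<omega>\<in>space M. alive n \<omega> \<and> S n \<omega> \<in> J} \<omega> \<partial>M)"
    by (subst nn_integral_indicator) auto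
  also have "\<dots> = (\<integral>\<^sup>+\<omega>. fT (V n \<omega>) \<partial>M)"
    by (intro nn_integral_cong) (auto simp: fT_def alive_def sv_V)
  also have "\<dots> = (\<integral>\<^sup>+\<omega>. fT (rev_vec n (V n \<omega>)) \<partial>M)"
    by (rule reversal) simp
  also have "\<dots> = (\<integral>\<^sup>+\<omega>. indicator {\<omega>\<in>space M. recd n \<omega> \<and> S n \<omega> \<in> J} \<omega> \<partial>M)"
  proof (intro nn_integral_cong)
    fix \<omega> assume "\<omega> \<in> space M"
    have 1: "(\<forall>k\<in>{1..n}. 0 < sv (rev_vec n (V n \<omega>)) k) \<longleftrightarrow> recd n \<omega>"
    proof -
      have "(\<forall>k\<in>{1..n}. 0 < sv (rev_vec n (V n \<omega>)) k) \<longleftrightarrow> (\<forall>k\<in>{1..n}. 0 < S n \<omega> - S (n - k) \<omega>)"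
        by (auto simp: sv_rev sv_V)
      also have "\<dots> \<longleftrightarrow> recd n \<omega>" unfolding recd_def by (rule ball_rev)
      finally show ?thesis .
    qed
    have 2: "sv (rev_vec n (V n \<omega>)) n = S n \<omega>"
      by (simp add: sv_rev sv_V) (simp add: S_def walk_def)
    show "fT (rev_vec n (V n \<omega>)) = indicator {\<omega>\<in>space M. recd n \<omega> \<and> S n \<omega> \<in> J} \<omega>"
      unfolding fT_def 1 2 using \<open>\<omega> \<in> space M\<close> by (simp add: indicator_def)
  qed
  also have "\<dots> = emeasure M {\<omega>\<in>space M. recd n \<omega> \<and> S n \<omega> \<in> J}"
    by (subst nn_integral_indicator) auto
  finally show ?thesis .
qed

lemma S_Suc: "S (Suc n) \<omega> = S n \<omega> + (B n \<omega> - A n \<omega>)"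
  unfolding S_def walk_def by simp

lemma jump_emeasure: "ennreal \<gamma> \<le> emeasure M {\<omega>\<in>space M. \<delta> \<le> B 0 \<omega> - A 0 \<omega>}"
  using jump dg by (simp add: emeasure_eq_measure)

lemma records_bound:
  "(\<Sum>n. emeasure M {\<omega>\<in>space M. recd n \<omega> \<and> S n \<omega> \<in> {y..<y+\<delta>}}) \<le> ennreal (1/\<gamma>)"
proof -
  define E where "E n = {\<omega>\<in>space M. recd n \<omega> \<and> S n \<omega> \<in> {y..<y+\<delta>}}" for n
  define L where "L n = {\<omega>\<in>space M. recd n \<omega> \<and> S n \<omega> \<in> {y..<y+\<delta>} \<and> \<delta> \<le> B n \<omega> - A n \<omega>}" for n
  define G where "G = {\<omega>\<in>space M. \<delta> \<le> B 0 \<omega> - A 0 \<omega>}"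
  have E_s[measurable]: "E n \<in> sets M" for n unfolding E_def by measurable
  have L_s[measurable]: "L n \<in> sets M" for n unfolding L_def by measurable
  have G_s[measurable]: "G \<in> sets M" unfolding G_def by measurable
  have LE: "emeasure M (L n) = emeasure M (E n) * emeasure M G" for n
  proof -
    define f where "f v = (if (\<forall>j\<in>{..<n}. sv v j < sv v n) \<and> sv v n \<in> {y..<y+\<delta>} then 1 else 0 :: ennreal)" for v
    define g where "g p = (if \<delta> \<le> snd p - fst p then 1 else 0 :: ennreal)" for p :: "real \<times> real"
    have [measurable]: "f \<in> borel_measurable (PiM {..<n} (\<lambda>_. BB))" unfolding f_def by measurable
    have [measurable]: "g \<in> borel_measurable BB" unfolding g_def by measurable
    have fV: "f (V n \<omega>) = indicator (E n) \<omega>" if "\<omega> \<in> space M" for \<omega>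
      using that by (simp add: f_def E_def recd_def sv_V indicator_def)
    have gP: "g (P k \<omega>) = indicator {\<omega>\<in>space M. \<delta> \<le> B k \<omega> - A k \<omega>} \<omega>" if "\<omega> \<in> space M" for \<omega> k
      using that by (simp add: g_def P_def indicator_def)
    have "emeasure M (L n) = (\<integral>\<^sup>+\<omega>. indicator (L n) \<omega> \<partial>M)" by simp
    also have "\<dots> = (\<integral>\<^sup>+\<omega>. f (V n \<omega>) * g (P n \<omega>) \<partial>M)"
      by (intro nn_integral_cong) (auto simp: fV gP L_def E_def indicator_def)
    also have "\<dots> = (\<integral>\<^sup>+\<omega>. f (V n \<omega>) \<partial>M) * (\<integral>\<^sup>+\<omega>. g (P 0 \<omega>) \<partial>M)"
      by (rule past_mult) auto
    also have "(\<integral>\<^sup>+\<omega>. f (V n \<omega>) \<partial>M) = emeasure M (E n)"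
      by (subst nn_integral_cong[OF fV]) auto
    also have "(\<integral>\<^sup>+\<omega>. g (P 0 \<omega>) \<partial>M) = emeasure M G"
      by (subst nn_integral_cong[OF gP]) (auto simp: G_def)
    finally show ?thesis .
  qed
  have disj: "disjoint_family L"
    unfolding disjoint_family_on_def
  proof (intro ballI impI)
    have *: False if "n < m" "\<omega> \<in> L n" "\<omega> \<in> L m" for n m \<omega>
    proof -
      have a: "S (Suc n) \<omega> \<ge> y + \<delta>" using that(2) by (auto simp: L_def S_Suc)
      have "S (Suc n) \<omega> \<le> S m \<omega>"
      proof (cases "Suc n = m")
        case False
        then have "Suc n < m" using that(1) by simp
        then show ?thesis using that(3) by (auto simp: L_def recd_def less_imp_le)
      qed simp
      then show False using a that(3) by (auto simp: L_def)
    qed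
    fix n m :: nat assume "n \<noteq> m"
    then show "L n \<inter> L m = {}"
      using *[of n m] *[of m n] by (cases "n < m") auto
  qed
  have "(\<Sum>n. emeasure M (E n)) * ennreal \<gamma> \<le> (\<Sum>n. emeasure M (E n)) * emeasure M G"
    using jump_emeasure by (intro mult_left_mono) (auto simp: G_def)
  also have "\<dots> = (\<Sum>n. emeasure M (L n))" by (simp add: LE)
  also have "\<dots> = emeasure M (\<Union>n. L n)" by (rule suminf_emeasure) (auto simp: disj)
  also have "\<dots> \<le> 1" by (rule emeasure_le_1)
  finally have h: "(\<Sum>n. emeasure M (E n)) * ennreal \<gamma> \<le> 1" .
  have "(\<Sum>n. emeasure M (E n)) = (\<Sum>n. emeasure M (E n)) * ennreal \<gamma> * ennreal (1/\<gamma>)"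
    using dg by (simp add: mult.assoc ennreal_mult[symmetric])
  also have "\<dots> \<le> 1 * ennreal (1/\<gamma>)" by (intro mult_right_mono h) simp
  finally show ?thesis by (simp add: E_def)
qed

abbreviation N where "N \<equiv> busy_jobs A B"
abbreviation I where "I \<equiv> idle_time A B"

lemma busy_gt: "enat n < N \<omega> \<longleftrightarrow> alive n \<omega>"
proof (cases "\<exists>m\<ge>1. walk A B m \<omega> \<le> 0")
  case True
  let ?L = "LEAST m. m \<ge> 1 \<and> walk A B m \<omega> \<le> 0"
  have L: "?L \<ge> 1 \<and> walk A B ?L \<omega> \<le> 0" using True by (metis (mono_tags, lifting) LeastI)
  have N: "N \<omega> = enat ?L" using True by (simp add: busy_jobs_def)
  show ?thesis
  proof
    assume "enat n < N \<omega>"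
    then have nL: "n < ?L" using N by simp
    show "alive n \<omega>" unfolding alive_def
    proof
      fix k assume k: "k \<in> {1..n}"
      show "0 < S k \<omega>"
      proof (rule ccontr)
        assume "\<not> 0 < S k \<omega>"
        then have "?L \<le> k" using k by (intro Least_le) (auto simp: S_def)
        then show False using nL k by auto
      qed
    qed
  next
    assume a: "alive n \<omega>"
    show "enat n < N \<omega>"
    proof (rule ccontr)
      assume "\<not> enat n < N \<omega>"
      then have "?L \<le> n" using N by simp
      then have "0 < S ?L \<omega>" using a L unfolding alive_def by auto
      then show False using L by (simp add: S_def)
    qed
  qed
next
  case False
  then have "N \<omega> = \<infinity>" by (simp add: busy_jobs_def)
  moreover have "alive n \<omega>" using False unfolding alive_def S_def by force
  ultimately show ?thesis by simp
qed

lemma busy_enat: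
  assumes "N \<omega> = enat m"
  shows "m \<ge> 1" "S m \<omega> \<le> 0" "alive (m - 1) \<omega>"
proof -
  have ex: "\<exists>m\<ge>1. walk A B m \<omega> \<le> 0"
    using assms by (auto simp: busy_jobs_def split: if_splits)
  let ?L = "LEAST m. m \<ge> 1 \<and> walk A B m \<omega> \<le> 0"
  have L: "?L \<ge> 1 \<and> walk A B ?L \<omega> \<le> 0" using ex by (metis (mono_tags, lifting) LeastI)
  have "m = ?L" using assms ex by (simp add: busy_jobs_def)
  then show "m \<ge> 1" "S m \<omega> \<le> 0" using L by (auto simp: S_def)
  show "alive (m - 1) \<omega>" using busy_gt[of "m - 1" \<omega>] assms \<open>m \<ge> 1\<close> by simp
qed

lemma I_nonneg: "0 \<le> I \<omega>"
  using busy_enat[of \<omega>] by (auto simp: idle_time_def S_def split: enat.splits)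

lemma I_enat: "N \<omega> = enat m \<Longrightarrow> I \<omega> = - S m \<omega>"
  by (simp add: idle_time_def S_def)

lemma I_inf: "N \<omega> = \<infinity> \<Longrightarrow> I \<omega> = 0"
  by (simp add: idle_time_def)

lemma N_meas[measurable]: "N \<in> measurable M (count_space UNIV)"
proof -
  have "N = (\<lambda>\<omega>. if \<exists>m\<ge>1. S m \<omega> \<le> 0 then enat (LEAST m. m \<ge> 1 \<and> S m \<omega> \<le> 0) else \<infinity>)"
    by (simp add: fun_eq_iff busy_jobs_def S_def)
  also have "\<dots> \<in> measurable M (count_space UNIV)"
    by measurable
  finally show ?thesis .
qed

lemma I_meas[measurable]: "I \<in> borel_measurable M"
proof -
  have "I = (\<lambda>\<omega>. case N \<omega> of enat m \<Rightarrow> - S m \<omega> | \<infinity> \<Rightarrow> 0)"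
    by (simp add: fun_eq_iff idle_time_def S_def split: enat.split)
  also have "\<dots> \<in> borel_measurable M"
    by measurable
  finally show ?thesis .
qed

definition hk :: "nat \<Rightarrow> real \<Rightarrow> ennreal" where "hk k a = (if real k * \<delta> < a then ennreal a else 0)"
definition Jk :: "nat \<Rightarrow> real set" where "Jk k = {real k * \<delta> ..< real k * \<delta> + \<delta>}"
definition t where "t k n \<omega> = indicator {\<omega>\<in>space M. alive n \<omega> \<and> S n \<omega> \<in> Jk k} \<omega> * hk k (A n \<omega>)"

lemma hk_meas[measurable]: "hk k \<in> borel_measurable borel"
  unfolding hk_def by measurable
lemma Jk_sets[measurable]: "Jk k \<in> sets borel" unfolding Jk_def by simp
lemma t_meas[measurable]: "t k n \<in> borel_measurable M"
  unfolding t_def by measurable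

lemma I_pointwise:
  assumes \<omega>: "\<omega> \<in> space M"
  shows "ennreal (I \<omega>) \<le> (\<Sum>k. \<Sum>n. t k n \<omega>)"
proof (cases "N \<omega>")
  case (enat m)
  note bm = busy_enat[OF enat]
  define n where "n = m - 1"
  have m: "m = Suc n" using bm(1) by (simp add: n_def)
  have al: "alive n \<omega>" using bm(3) by (simp add: n_def)
  have Sm: "S n \<omega> + (B n \<omega> - A n \<omega>) \<le> 0" using bm(2) by (simp add: m S_Suc)
  have Sn: "0 \<le> S n \<omega>"
  proof (cases "n = 0")
    case True then show ?thesis by (simp add: S_def walk_def)
  next
    case False then show ?thesis using al unfolding alive_def by (auto intro: less_imp_le)
  qed
  have Bp: "0 < B n \<omega>" using B_pos \<omega> by simp
  define k where "k = nat \<lfloor>S n \<omega> / \<delta>\<rfloor>"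
  have kb: "real k * \<delta> \<le> S n \<omega>" "S n \<omega> < real k * \<delta> + \<delta>"
    using floor_bounds[OF Sn dg(1)] by (simp_all add: k_def)
  have I_le: "I \<omega> \<le> A n \<omega>" using I_enat[OF enat] Sm Sn Bp by (simp add: m S_Suc)
  have "t k n \<omega> = ennreal (A n \<omega>)"
    using al kb \<omega> Sm Bp by (auto simp: t_def hk_def Jk_def indicator_def)
  then have "ennreal (I \<omega>) \<le> t k n \<omega>" using I_le by (simp add: ennreal_leI)
  also have "\<dots> \<le> (\<Sum>n. t k n \<omega>)" by (rule ennreal_le_suminf)
  also have "\<dots> \<le> (\<Sum>k. \<Sum>n. t k n \<omega>)" by (rule ennreal_le_suminf[where f = "\<lambda>k. \<Sum>n. t k n \<omega>"])
  finally show ?thesis .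
next
  case infinity
  then show ?thesis by (simp add: I_inf)
qed

lemma t_int: "(\<integral>\<^sup>+\<omega>. t k n \<omega> \<partial>M) = emeasure M {\<omega>\<in>space M. alive n \<omega> \<and> S n \<omega> \<in> Jk k} * (\<integral>\<^sup>+\<omega>. hk k (A 0 \<omega>) \<partial>M)"
proof -
  define f where "f v = (if (\<forall>j\<in>{1..n}. 0 < sv v j) \<and> sv v n \<in> Jk k then 1 else 0 :: ennreal)" for v
  define g where "g p = hk k (fst p)" for p :: "real \<times> real"
  have [measurable]: "f \<in> borel_measurable (PiM {..<n} (\<lambda>_. BB))" unfolding f_def by measurable
  have [measurable]: "g \<in> borel_measurable BB" unfolding g_def by measurable
  have fV: "f (V n \<omega>) = indicator {\<omega>\<in>space M. alive n \<omega> \<and> S n \<omega> \<in> Jk k} \<omega>" if "\<omega> \<in> space M" for \<omega>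
    using that by (simp add: f_def alive_def sv_V indicator_def)
  have "(\<integral>\<^sup>+\<omega>. t k n \<omega> \<partial>M) = (\<integral>\<^sup>+\<omega>. f (V n \<omega>) * g (P n \<omega>) \<partial>M)"
    by (intro nn_integral_cong) (simp add: fV t_def g_def P_def)
  also have "\<dots> = (\<integral>\<^sup>+\<omega>. f (V n \<omega>) \<partial>M) * (\<integral>\<^sup>+\<omega>. g (P 0 \<omega>) \<partial>M)"
    by (rule past_mult) auto
  also have "(\<integral>\<^sup>+\<omega>. f (V n \<omega>) \<partial>M) = emeasure M {\<omega>\<in>space M. alive n \<omega> \<and> S n \<omega> \<in> Jk k}"
    by (subst nn_integral_cong[OF fV]) auto
  finally show ?thesis by (simp add: g_def P_def)
qed

lemma hk_sum:
  assumes a: "0 < a"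
  shows "(\<Sum>k. hk k a) \<le> ennreal (a * a / \<delta> + a)"
proof -
  define K where "K = nat \<lceil>a / \<delta>\<rceil>"
  have z: "hk k a = 0" if "k \<notin> {..<K}" for k
  proof -
    have "real K \<le> real k" using that by simp
    moreover have "a / \<delta> \<le> real K" unfolding K_def by linarith
    ultimately have "a / \<delta> \<le> real k" by linarith
    then have "a \<le> real k * \<delta>" using dg by (simp add: divide_le_eq)
    then show ?thesis by (simp add: hk_def)
  qed
  have "(\<Sum>k. hk k a) = (\<Sum>k<K. hk k a)" by (rule suminf_finite) (use z in auto)
  also have "\<dots> \<le> (\<Sum>k<K. ennreal a)" by (intro sum_mono) (simp add: hk_def)
  also have "\<dots> = ennreal (real K * a)" using a by (simp add: ennreal_mult ennreal_of_nat_eq_real_of_nat)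
  also have "\<dots> \<le> ennreal (a * a / \<delta> + a)"
  proof (rule ennreal_leI)
    have "0 < a / \<delta>" using a dg by simp
    then have c0: "0 \<le> \<lceil>a / \<delta>\<rceil>" by linarith
    have "of_int \<lceil>a / \<delta>\<rceil> < a / \<delta> + 1" by linarith
    then have "real K \<le> a / \<delta> + 1" unfolding K_def using c0 by simp
    then have "real K * a \<le> (a / \<delta> + 1) * a" using a by (intro mult_right_mono) auto
    then show "real K * a \<le> a * a / \<delta> + a" by (simp add: algebra_simps)
  qed
  finally show ?thesis .
qed

lemma H_sum: "(\<Sum>k. \<integral>\<^sup>+\<omega>. hk k (A 0 \<omega>) \<partial>M) \<le> ennreal (expectation (\<lambda>\<omega>. (A 0 \<omega>)\<^sup>2) / \<delta> + expectation (A 0))"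
proof -
  have "(\<Sum>k. \<integral>\<^sup>+\<omega>. hk k (A 0 \<omega>) \<partial>M) = (\<integral>\<^sup>+\<omega>. (\<Sum>k. hk k (A 0 \<omega>)) \<partial>M)"
    by (rule nn_integral_suminf[symmetric]) simp
  also have "\<dots> \<le> (\<integral>\<^sup>+\<omega>. ennreal ((A 0 \<omega>)\<^sup>2 / \<delta> + A 0 \<omega>) \<partial>M)"
    by (intro nn_integral_mono) (use hk_sum A_pos in \<open>auto simp: power2_eq_square\<close>)
  also have "\<dots> = ennreal (\<integral>\<omega>. (A 0 \<omega>)\<^sup>2 / \<delta> + A 0 \<omega> \<partial>M)"
  proof (rule nn_integral_eq_integral)
    show "integrable M (\<lambda>\<omega>. (A 0 \<omega>)\<^sup>2 / \<delta> + A 0 \<omega>)" using A_sq A_int by auto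
    show "AE \<omega> in M. 0 \<le> (A 0 \<omega>)\<^sup>2 / \<delta> + A 0 \<omega>"
    proof (rule AE_I2)
      fix \<omega> assume "\<omega> \<in> space M"
      then have "0 < A 0 \<omega>" by (rule A_pos)
      then show "0 \<le> (A 0 \<omega>)\<^sup>2 / \<delta> + A 0 \<omega>" using dg by (simp add: add_nonneg_nonneg)
    qed
  qed
  also have "(\<integral>\<omega>. (A 0 \<omega>)\<^sup>2 / \<delta> + A 0 \<omega> \<partial>M) = expectation (\<lambda>\<omega>. (A 0 \<omega>)\<^sup>2) / \<delta> + expectation (A 0)"
    using A_sq A_int by (simp add: integral_add)
  finally show ?thesis .
qed

lemma I_upper: "(\<integral>\<^sup>+\<omega>. ennreal (I \<omega>) \<partial>M) \<le> ennreal (1/\<gamma>) * ennreal (expectation (\<lambda>\<omega>. (A 0 \<omega>)\<^sup>2) / \<delta> + expectation (A 0))"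
proof -
  let ?H = "\<lambda>k. \<integral>\<^sup>+\<omega>. hk k (A 0 \<omega>) \<partial>M"
  have "(\<integral>\<^sup>+\<omega>. ennreal (I \<omega>) \<partial>M) \<le> (\<integral>\<^sup>+\<omega>. (\<Sum>k. \<Sum>n. t k n \<omega>) \<partial>M)"
    by (intro nn_integral_mono I_pointwise)
  also have "\<dots> = (\<Sum>k. \<integral>\<^sup>+\<omega>. (\<Sum>n. t k n \<omega>) \<partial>M)"
    by (rule nn_integral_suminf) simp
  also have "\<dots> = (\<Sum>k. \<Sum>n. \<integral>\<^sup>+\<omega>. t k n \<omega> \<partial>M)"
    by (subst nn_integral_suminf) simp_all
  also have "\<dots> = (\<Sum>k. (\<Sum>n. emeasure M {\<omega>\<in>space M. recd n \<omega> \<and> S n \<omega> \<in> Jk k}) * ?H k)"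
    by (simp add: t_int alive_rev_eq)
  also have "\<dots> \<le> (\<Sum>k. ennreal (1/\<gamma>) * ?H k)"
  proof (intro suminf_le mult_right_mono)
    fix k
    show "(\<Sum>n. emeasure M {\<omega>\<in>space M. recd n \<omega> \<and> S n \<omega> \<in> Jk k}) \<le> ennreal (1/\<gamma>)"
      using records_bound[of "real k * \<delta>"] by (simp add: Jk_def)
  qed (auto simp: summableI)
  also have "\<dots> = ennreal (1/\<gamma>) * (\<Sum>k. ?H k)" by simp
  also have "\<dots> \<le> ennreal (1/\<gamma>) * ennreal (expectation (\<lambda>\<omega>. (A 0 \<omega>)\<^sup>2) / \<delta> + expectation (A 0))"
    by (intro mult_left_mono H_sum) simp
  finally show ?thesis .
qed

lemma I_ge_first: "\<omega> \<in> space M \<Longrightarrow> max (A 0 \<omega> - B 0 \<omega>) 0 \<le> I \<omega>"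
proof (cases "A 0 \<omega> - B 0 \<omega> \<ge> 0")
  case True
  have w1: "walk A B 1 \<omega> \<le> 0" using True by (simp add: walk_def)
  have L: "(LEAST m. m \<ge> 1 \<and> walk A B m \<omega> \<le> 0) = 1"
    by (rule Least_equality) (use w1 in auto)
  have ex: "\<exists>m\<ge>1. walk A B m \<omega> \<le> 0" using w1 by auto
  have "N \<omega> = enat 1" unfolding busy_jobs_def if_P[OF ex] L ..
  then have "I \<omega> = - S 1 \<omega>" by (rule I_enat)
  then show ?thesis using True by (simp add: S_def walk_def)
qed (use I_nonneg in auto)

lemma I_lower: "ennreal (\<delta> * \<gamma>) \<le> (\<integral>\<^sup>+\<omega>. ennreal (I \<omega>) \<partial>M)"
proof -
  define G where "G = {\<omega>\<in>space M. \<delta> \<le> B 0 \<omega> - A 0 \<omega>}"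
  have G_s[measurable]: "G \<in> sets M" unfolding G_def by measurable
  have i1: "integrable M (\<lambda>\<omega>. A 0 \<omega> - B 0 \<omega>)" using A_int B_int by auto
  have i2: "integrable M (\<lambda>\<omega>. max (B 0 \<omega> - A 0 \<omega>) 0)" using A_int B_int by auto
  have i3: "integrable M (\<lambda>\<omega>. max (A 0 \<omega> - B 0 \<omega>) 0)" using A_int B_int by auto
  have i4: "integrable M (\<lambda>\<omega>. \<delta> * indicator G \<omega>)"
    using G_s by (auto intro!: integrable_real_indicator simp: emeasure_eq_measure)
  have "\<delta> * \<gamma> \<le> \<delta> * measure M G" using jump dg by (simp add: G_def)
  also have "\<dots> = (\<integral>\<omega>. \<delta> * indicator G \<omega> \<partial>M)" by simp
  also have "\<dots> \<le> (\<integral>\<omega>. max (B 0 \<omega> - A 0 \<omega>) 0 \<partial>M)"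
    by (rule integral_mono[OF i4 i2]) (use dg in \<open>auto simp: G_def indicator_def\<close>)
  also have "\<dots> < (\<integral>\<omega>. A 0 \<omega> - B 0 \<omega> \<partial>M) + (\<integral>\<omega>. max (B 0 \<omega> - A 0 \<omega>) 0 \<partial>M)"
    using EBA A_int B_int by (simp add: Bochner_Integration.integral_diff)
  also have "\<dots> = (\<integral>\<omega>. max (A 0 \<omega> - B 0 \<omega>) 0 \<partial>M)"
    by (subst Bochner_Integration.integral_add[symmetric, OF i1 i2]) (auto intro!: Bochner_Integration.integral_cong simp: max_def)
  finally have r: "\<delta> * \<gamma> \<le> (\<integral>\<omega>. max (A 0 \<omega> - B 0 \<omega>) 0 \<partial>M)" by simp
  have "ennreal (\<delta> * \<gamma>) \<le> ennreal (\<integral>\<omega>. max (A 0 \<omega> - B 0 \<omega>) 0 \<partial>M)" using r by (rule ennreal_leI)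
  also have "\<dots> = (\<integral>\<^sup>+\<omega>. ennreal (max (A 0 \<omega> - B 0 \<omega>) 0) \<partial>M)"
    by (rule nn_integral_eq_integral[symmetric, OF i3]) auto
  also have "\<dots> \<le> (\<integral>\<^sup>+\<omega>. ennreal (I \<omega>) \<partial>M)"
    by (intro nn_integral_mono ennreal_leI I_ge_first)
  finally show ?thesis .
qed

definition pa where "pa i = emeasure M {\<omega>\<in>space M. alive i \<omega>}"
abbreviation al where "al i \<equiv> {\<omega>\<in>space M. alive i \<omega>}"

lemma al_sets[measurable]: "al i \<in> sets M" by measurable

lemma N_sum: "ennreal_of_enat (N \<omega>) = (\<Sum>i. indicator (al i) \<omega>)" if \<omega>: "\<omega> \<in> space M"
proof (cases "N \<omega>")
  case (enat K)
  have "(\<Sum>i. indicator (al i) \<omega> :: ennreal) = (\<Sum>i<K. indicator (al i) \<omega>)"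
  proof (rule suminf_finite)
    fix i assume "i \<notin> {..<K}"
    then have "\<not> alive i \<omega>" using busy_gt[of i \<omega>] enat by simp
    then show "indicator (al i) \<omega> = (0::ennreal)" by simp
  qed simp
  also have "\<dots> = (\<Sum>i<K. 1)"
    by (intro sum.cong refl) (use busy_gt[of _ \<omega>] enat \<omega> in auto)
  finally show ?thesis using enat by simp
next
  case infinity
  then have "(\<Sum>i. indicator (al i) \<omega> :: ennreal) = (\<Sum>i. ennreal 1)"
    using busy_gt[of _ \<omega>] \<omega> by simp
  also have "\<dots> = top"
    by (rule summable_iff_suminf_neq_top) (auto simp: summable_const_iff)
  finally show ?thesis using infinity by simp
qed

lemma EN: "(\<integral>\<^sup>+\<omega>. ennreal_of_enat (N \<omega>) \<partial>M) = (\<Sum>i. pa i)"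
proof -
  have "(\<integral>\<^sup>+\<omega>. ennreal_of_enat (N \<omega>) \<partial>M) = (\<integral>\<^sup>+\<omega>. (\<Sum>i. indicator (al i) \<omega>) \<partial>M)"
    by (intro nn_integral_cong N_sum)
  also have "\<dots> = (\<Sum>i. pa i)"
    by (subst nn_integral_suminf) (auto simp: pa_def[abs_def])
  finally show ?thesis .
qed

lemma wald_term:
  assumes g[measurable]: "g \<in> borel_measurable BB"
  shows "(\<integral>\<^sup>+\<omega>. indicator (al i) \<omega> * g (P i \<omega>) \<partial>M) = pa i * (\<integral>\<^sup>+\<omega>. g (P 0 \<omega>) \<partial>M)"
proof -
  define f where "f v = (if (\<forall>j\<in>{1..i}. 0 < sv v j) then 1 else 0 :: ennreal)" for v
  have [measurable]: "f \<in> borel_measurable (PiM {..<i} (\<lambda>_. BB))" unfolding f_def by measurable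
  have fV: "f (V i \<omega>) = indicator (al i) \<omega>" if "\<omega> \<in> space M" for \<omega>
    using that by (simp add: f_def alive_def sv_V indicator_def)
  have "(\<integral>\<^sup>+\<omega>. indicator (al i) \<omega> * g (P i \<omega>) \<partial>M) = (\<integral>\<^sup>+\<omega>. f (V i \<omega>) * g (P i \<omega>) \<partial>M)"
    by (intro nn_integral_cong) (simp add: fV)
  also have "\<dots> = (\<integral>\<^sup>+\<omega>. f (V i \<omega>) \<partial>M) * (\<integral>\<^sup>+\<omega>. g (P 0 \<omega>) \<partial>M)"
    by (rule past_mult) auto
  also have "(\<integral>\<^sup>+\<omega>. f (V i \<omega>) \<partial>M) = pa i"
    by (subst nn_integral_cong[OF fV]) (auto simp: pa_def)
  finally show ?thesis .
qed

lemma EA_nn: "(\<integral>\<^sup>+\<omega>. ennreal (A 0 \<omega>) \<partial>M) = ennreal (expectation (A 0))"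
  by (rule nn_integral_eq_integral[OF A_int]) (use A_pos in \<open>auto intro!: AE_I2 less_imp_le\<close>)
lemma EB_nn: "(\<integral>\<^sup>+\<omega>. ennreal (B 0 \<omega>) \<partial>M) = ennreal (expectation (B 0))"
  by (rule nn_integral_eq_integral[OF B_int]) (use B_pos in \<open>auto intro!: AE_I2 less_imp_le\<close>)

lemma wald_A: "(\<integral>\<^sup>+\<omega>. indicator (al i) \<omega> * ennreal (A i \<omega>) \<partial>M) = pa i * ennreal (expectation (A 0))"
  using wald_term[of "\<lambda>p. ennreal (fst p)" i] by (simp add: P_def EA_nn)
lemma wald_B: "(\<integral>\<^sup>+\<omega>. indicator (al i) \<omega> * ennreal (B i \<omega>) \<partial>M) = pa i * ennreal (expectation (B 0))"
  using wald_term[of "\<lambda>p. ennreal (snd p)" i] by (simp add: P_def EB_nn)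

lemma trunc_pw:
  assumes \<omega>: "\<omega> \<in> space M"
  shows "(\<Sum>i<m. indicator (al i) \<omega> * (A i \<omega> - B i \<omega>)) \<le> I \<omega>"
proof (cases "N \<omega> \<le> enat m")
  case True
  then obtain K where K: "N \<omega> = enat K" "K \<le> m" by (cases "N \<omega>") auto
  have "(\<Sum>i<m. indicator (al i) \<omega> * (A i \<omega> - B i \<omega>)) = (\<Sum>i<K. A i \<omega> - B i \<omega>)"
  proof (rule sum.mono_neutral_cong_right)
    show "\<forall>i\<in>{..<m} - {..<K}. indicator (al i) \<omega> * (A i \<omega> - B i \<omega>) = 0"
    proof
      fix i assume "i \<in> {..<m} - {..<K}"
      then have "\<not> alive i \<omega>" using busy_gt[of i \<omega>] K(1) by simp
      then show "indicator (al i) \<omega> * (A i \<omega> - B i \<omega>) = 0" by simp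
    qed
    fix i assume "i \<in> {..<K}"
    then have "alive i \<omega>" using busy_gt[of i \<omega>] K(1) by simp
    then show "indicator (al i) \<omega> * (A i \<omega> - B i \<omega>) = A i \<omega> - B i \<omega>" using \<omega> by simp
  qed (use K in auto)
  also have "\<dots> = I \<omega>" using I_enat[OF K(1)] by (simp add: S_def walk_def sum_negf[symmetric])
  finally show ?thesis by simp
next
  case False
  then have lt: "enat m < N \<omega>" by simp
  have "(\<Sum>i<m. indicator (al i) \<omega> * (A i \<omega> - B i \<omega>)) = (\<Sum>i<m. A i \<omega> - B i \<omega>)"
  proof (intro sum.cong refl)
    fix i assume "i \<in> {..<m}"
    then have "enat i < N \<omega>" using lt by (meson enat_ord_simps(2) lessThan_iff order.strict_trans) 
    then show "indicator (al i) \<omega> * (A i \<omega> - B i \<omega>) = A i \<omega> - B i \<omega>" using busy_gt \<omega> by simp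
  qed
  also have "\<dots> = - S m \<omega>" by (simp add: S_def walk_def sum_negf[symmetric])
  also have "\<dots> \<le> 0"
  proof (cases "m = 0")
    case True then show ?thesis by (simp add: S_def walk_def)
  next
    case False
    then have "alive m \<omega>" using busy_gt lt by simp
    then show ?thesis using False unfolding alive_def by (auto intro: less_imp_le)
  qed
  also have "\<dots> \<le> I \<omega>" by (rule I_nonneg)
  finally show ?thesis .
qed

lemma pa_real: "pa i = ennreal (measure M (al i))"
  by (simp add: pa_def emeasure_eq_measure)

lemma trunc_bound: "ennreal (expectation (A 0) - expectation (B 0)) * (\<Sum>i<m. pa i) \<le> (\<integral>\<^sup>+\<omega>. ennreal (I \<omega>) \<partial>M)"
proof -
  define x where "x = (\<Sum>i<m. measure M (al i))"
  have x0: "0 \<le> x" unfolding x_def by (simp add: sum_nonneg)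
  have EB0: "0 \<le> expectation (B 0)"
    using B_pos by (intro integral_nonneg_AE AE_I2) (auto intro: less_imp_le)
  have EA0: "0 \<le> expectation (A 0)"
    using A_pos by (intro integral_nonneg_AE AE_I2) (auto intro: less_imp_le)
  have X: "(\<Sum>i<m. pa i) = ennreal x" unfolding x_def by (simp add: pa_real)
  have pw: "(\<Sum>i<m. indicator (al i) \<omega> * ennreal (A i \<omega>)) \<le> ennreal (I \<omega>) + (\<Sum>i<m. indicator (al i) \<omega> * ennreal (B i \<omega>))"
    if \<omega>: "\<omega> \<in> space M" for \<omega>
  proof -
    have Ap: "0 \<le> A i \<omega>" "0 \<le> B i \<omega>" for i using A_pos B_pos \<omega> by (auto intro: less_imp_le)
    have e1: "(\<Sum>i<m. indicator (al i) \<omega> * ennreal (A i \<omega>)) = ennreal (\<Sum>i<m. indicator (al i) \<omega> * A i \<omega>)"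
      by (subst sum_ennreal[symmetric]) (auto simp: Ap indicator_def)
    have e2: "(\<Sum>i<m. indicator (al i) \<omega> * ennreal (B i \<omega>)) = ennreal (\<Sum>i<m. indicator (al i) \<omega> * B i \<omega>)"
      by (subst sum_ennreal[symmetric]) (auto simp: Ap indicator_def)
    have "(\<Sum>i<m. indicator (al i) \<omega> * A i \<omega>) \<le> I \<omega> + (\<Sum>i<m. indicator (al i) \<omega> * B i \<omega>)"
      using trunc_pw[OF \<omega>, of m] by (simp add: right_diff_distrib sum_subtractf)
    then show ?thesis unfolding e1 e2
      using I_nonneg[of \<omega>] by (subst ennreal_plus[symmetric]) (auto intro!: ennreal_leI sum_nonneg simp: Ap)
  qed
  have "ennreal x * ennreal (expectation (A 0)) = (\<Sum>i<m. pa i * ennreal (expectation (A 0)))"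
    by (simp add: X[symmetric] sum_distrib_right)
  also have "\<dots> = (\<integral>\<^sup>+\<omega>. (\<Sum>i<m. indicator (al i) \<omega> * ennreal (A i \<omega>)) \<partial>M)"
    by (subst nn_integral_sum) (auto simp: wald_A)
  also have "\<dots> \<le> (\<integral>\<^sup>+\<omega>. ennreal (I \<omega>) + (\<Sum>i<m. indicator (al i) \<omega> * ennreal (B i \<omega>)) \<partial>M)"
    by (intro nn_integral_mono pw)
  also have "\<dots> = (\<integral>\<^sup>+\<omega>. ennreal (I \<omega>) \<partial>M) + (\<Sum>i<m. pa i * ennreal (expectation (B 0)))"
  proof -
    have m1: "(\<lambda>\<omega>. \<Sum>i<m. indicator (al i) \<omega> * ennreal (B i \<omega>)) \<in> borel_measurable M" by measurable
    have "(\<integral>\<^sup>+\<omega>. ennreal (I \<omega>) + (\<Sum>i<m. indicator (al i) \<omega> * ennreal (B i \<omega>)) \<partial>M)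
       = (\<integral>\<^sup>+\<omega>. ennreal (I \<omega>) \<partial>M) + (\<integral>\<^sup>+\<omega>. (\<Sum>i<m. indicator (al i) \<omega> * ennreal (B i \<omega>)) \<partial>M)"
      by (rule nn_integral_add) (use m1 in auto)
    also have "(\<integral>\<^sup>+\<omega>. (\<Sum>i<m. indicator (al i) \<omega> * ennreal (B i \<omega>)) \<partial>M) = (\<Sum>i<m. pa i * ennreal (expectation (B 0)))"
      by (subst nn_integral_sum) (simp_all add: wald_B)
    finally show ?thesis .
  qed
  also have "(\<Sum>i<m. pa i * ennreal (expectation (B 0))) = ennreal x * ennreal (expectation (B 0))"
    by (simp add: X[symmetric] sum_distrib_right)
  finally have h: "ennreal (x * expectation (A 0)) \<le> (\<integral>\<^sup>+\<omega>. ennreal (I \<omega>) \<partial>M) + ennreal (x * expectation (B 0))"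
    using x0 EA0 EB0 by (simp add: ennreal_mult)
  have "ennreal (expectation (A 0) - expectation (B 0)) * (\<Sum>i<m. pa i) = ennreal (x * expectation (A 0)) - ennreal (x * expectation (B 0))"
    using x0 EB0 EBA by (simp add: X ennreal_minus ennreal_mult[symmetric] algebra_simps)
  also have "\<dots> \<le> (\<integral>\<^sup>+\<omega>. ennreal (I \<omega>) \<partial>M)"
    unfolding ennreal_minus_le_iff using h by (simp add: add.commute)
  finally show ?thesis .
qed

lemma N_le: "ennreal (expectation (A 0) - expectation (B 0)) * (\<integral>\<^sup>+\<omega>. ennreal_of_enat (N \<omega>) \<partial>M) \<le> (\<integral>\<^sup>+\<omega>. ennreal (I \<omega>) \<partial>M)"
proof -
  have "ennreal (expectation (A 0) - expectation (B 0)) * (\<Sum>i. pa i) = (\<Sum>i. ennreal (expectation (A 0) - expectation (B 0)) * pa i)"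
    by simp
  also have "\<dots> \<le> (\<integral>\<^sup>+\<omega>. ennreal (I \<omega>) \<partial>M)"
    by (rule suminf_le_const) (auto simp: summableI sum_distrib_left[symmetric] trunc_bound)
  finally show ?thesis by (simp add: EN)
qed

lemma sum_ind_fin:
  assumes \<omega>: "\<omega> \<in> space M" and K: "N \<omega> = enat K" and f: "\<And>i. 0 \<le> f i"
  shows "(\<Sum>i. indicator (al i) \<omega> * ennreal (f i)) = ennreal (\<Sum>i<K. f i)"
proof -
  have "(\<Sum>i. indicator (al i) \<omega> * ennreal (f i)) = (\<Sum>i<K. indicator (al i) \<omega> * ennreal (f i))"
  proof (rule suminf_finite)
    fix i assume "i \<notin> {..<K}"
    then have "\<not> alive i \<omega>" using busy_gt[of i \<omega>] K by simp
    then show "indicator (al i) \<omega> * ennreal (f i) = 0" by simp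
  qed simp
  also have "\<dots> = (\<Sum>i<K. ennreal (f i))"
  proof (intro sum.cong refl)
    fix i assume "i \<in> {..<K}"
    then have "alive i \<omega>" using busy_gt[of i \<omega>] K by simp
    then show "indicator (al i) \<omega> * ennreal (f i) = ennreal (f i)" using \<omega> by simp
  qed
  also have "\<dots> = ennreal (\<Sum>i<K. f i)" using f by simp
  finally show ?thesis .
qed

lemma wald_sum_A: "(\<integral>\<^sup>+\<omega>. (\<Sum>i. indicator (al i) \<omega> * ennreal (A i \<omega>)) \<partial>M) = (\<integral>\<^sup>+\<omega>. ennreal_of_enat (N \<omega>) \<partial>M) * ennreal (expectation (A 0))"
  by (subst nn_integral_suminf) (simp_all add: wald_A EN)
lemma wald_sum_B: "(\<integral>\<^sup>+\<omega>. (\<Sum>i. indicator (al i) \<omega> * ennreal (B i \<omega>)) \<partial>M) = (\<integral>\<^sup>+\<omega>. ennreal_of_enat (N \<omega>) \<partial>M) * ennreal (expectation (B 0))"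
  by (subst nn_integral_suminf) (simp_all add: wald_B EN)

lemma I_eq:
  assumes fin: "(\<integral>\<^sup>+\<omega>. ennreal_of_enat (N \<omega>) \<partial>M) \<noteq> \<infinity>"
  shows "(\<integral>\<^sup>+\<omega>. ennreal (I \<omega>) \<partial>M) = ennreal (expectation (A 0) - expectation (B 0)) * (\<integral>\<^sup>+\<omega>. ennreal_of_enat (N \<omega>) \<partial>M)"
proof -
  let ?EN = "(\<integral>\<^sup>+\<omega>. ennreal_of_enat (N \<omega>) \<partial>M)"
  have Nm: "(\<lambda>\<omega>. ennreal_of_enat (N \<omega>)) \<in> borel_measurable M" by measurable
  have ae: "AE \<omega> in M. ennreal_of_enat (N \<omega>) \<noteq> \<infinity>" by (rule nn_integral_PInf_AE[OF Nm fin])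
  have pw: "AE \<omega> in M. ennreal (I \<omega>) + (\<Sum>i. indicator (al i) \<omega> * ennreal (B i \<omega>)) = (\<Sum>i. indicator (al i) \<omega> * ennreal (A i \<omega>))"
    using ae
  proof (rule AE_mp, intro AE_I2 impI)
    fix \<omega> assume \<omega>: "\<omega> \<in> space M" and nf: "ennreal_of_enat (N \<omega>) \<noteq> \<infinity>"
    then obtain K where K: "N \<omega> = enat K" by (cases "N \<omega>") auto
    have Ap: "0 \<le> A i \<omega>" "0 \<le> B i \<omega>" for i using A_pos B_pos \<omega> by (auto intro: less_imp_le)
    have I: "I \<omega> = (\<Sum>i<K. A i \<omega>) - (\<Sum>i<K. B i \<omega>)"
      using I_enat[OF K] by (simp add: S_def walk_def sum_subtractf)
    have "ennreal (I \<omega>) + ennreal (\<Sum>i<K. B i \<omega>) = ennreal (I \<omega> + (\<Sum>i<K. B i \<omega>))"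
      using I_nonneg[of \<omega>] Ap by (simp add: ennreal_plus sum_nonneg)
    also have "\<dots> = ennreal (\<Sum>i<K. A i \<omega>)" by (simp add: I)
    finally show "ennreal (I \<omega>) + (\<Sum>i. indicator (al i) \<omega> * ennreal (B i \<omega>)) = (\<Sum>i. indicator (al i) \<omega> * ennreal (A i \<omega>))"
      using sum_ind_fin[OF \<omega> K, of "\<lambda>i. A i \<omega>"] sum_ind_fin[OF \<omega> K, of "\<lambda>i. B i \<omega>"] Ap by simp
  qed
  have m1: "(\<lambda>\<omega>. \<Sum>i. indicator (al i) \<omega> * ennreal (B i \<omega>)) \<in> borel_measurable M" by measurable
  have "(\<integral>\<^sup>+\<omega>. ennreal (I \<omega>) \<partial>M) + ?EN * ennreal (expectation (B 0))
     = (\<integral>\<^sup>+\<omega>. ennreal (I \<omega>) + (\<Sum>i. indicator (al i) \<omega> * ennreal (B i \<omega>)) \<partial>M)"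
    by (subst nn_integral_add) (use m1 in \<open>auto simp: wald_sum_B\<close>)
  also have "\<dots> = (\<integral>\<^sup>+\<omega>. (\<Sum>i. indicator (al i) \<omega> * ennreal (A i \<omega>)) \<partial>M)"
    by (rule nn_integral_cong_AE[OF pw])
  also have "\<dots> = ?EN * ennreal (expectation (A 0))" by (rule wald_sum_A)
  finally have h: "(\<integral>\<^sup>+\<omega>. ennreal (I \<omega>) \<partial>M) + ?EN * ennreal (expectation (B 0)) = ?EN * ennreal (expectation (A 0))" .
  obtain e where e: "?EN = ennreal e" "0 \<le> e" using fin by (cases "?EN") auto
  have EB0: "0 \<le> expectation (B 0)"
    using B_pos by (intro integral_nonneg_AE AE_I2) (auto intro: less_imp_le)
  have EA0: "0 \<le> expectation (A 0)"
    using A_pos by (intro integral_nonneg_AE AE_I2) (auto intro: less_imp_le)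
  have "(\<integral>\<^sup>+\<omega>. ennreal (I \<omega>) \<partial>M) = ((\<integral>\<^sup>+\<omega>. ennreal (I \<omega>) \<partial>M) + ennreal (e * expectation (B 0))) - ennreal (e * expectation (B 0))"
    by (simp add: ennreal_add_diff_cancel_right)
  also have "\<dots> = ennreal (e * expectation (A 0)) - ennreal (e * expectation (B 0))"
    using h e EA0 EB0 by (simp add: ennreal_mult)
  also have "\<dots> = ennreal (expectation (A 0) - expectation (B 0)) * ?EN"
    using e EB0 EBA by (simp add: ennreal_minus ennreal_mult[symmetric] algebra_simps)
  finally show ?thesis .
qed

lemma EN_fin: "(\<integral>\<^sup>+\<omega>. ennreal_of_enat (N \<omega>) \<partial>M) \<noteq> \<infinity>"
proof
  assume inf: "(\<integral>\<^sup>+\<omega>. ennreal_of_enat (N \<omega>) \<partial>M) = \<infinity>"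
  have "0 < expectation (A 0) - expectation (B 0)" using EBA by simp
  then have "ennreal (expectation (A 0) - expectation (B 0)) * (\<integral>\<^sup>+\<omega>. ennreal_of_enat (N \<omega>) \<partial>M) = \<infinity>"
    using inf by (simp add: ennreal_mult_eq_top_iff)
  then have "\<infinity> \<le> (\<integral>\<^sup>+\<omega>. ennreal (I \<omega>) \<partial>M)" using N_le by simp
  then have "(\<integral>\<^sup>+\<omega>. ennreal (I \<omega>) \<partial>M) = \<infinity>" by (simp add: top_unique)
  then show False using I_upper by (simp add: ennreal_mult_eq_top_iff top_unique)
qed

lemma final_N:
  "ennreal ((expectation (A 0) - expectation (B 0)) / expectation (A 0)) * (\<integral>\<^sup>+\<omega>. ennreal_of_enat (N \<omega>) \<partial>M)
    = ennreal (1 / expectation (A 0)) * (\<integral>\<^sup>+\<omega>. ennreal (I \<omega>) \<partial>M)"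
proof -
  have EA0: "0 < expectation (A 0)"
  proof -
    have "0 \<le> expectation (B 0)"
      using B_pos by (intro integral_nonneg_AE AE_I2) (auto intro: less_imp_le)
    then show ?thesis using EBA by linarith
  qed
  have "ennreal ((expectation (A 0) - expectation (B 0)) / expectation (A 0)) = ennreal (1 / expectation (A 0)) * ennreal (expectation (A 0) - expectation (B 0))"
    using EA0 EBA by (simp add: ennreal_mult[symmetric])
  then show ?thesis by (simp add: I_eq[OF EN_fin] mult.assoc)
qed

end
theorem lemma1:
  fixes M :: "nat \<Rightarrow> 'a measure"
    and A B :: "nat \<Rightarrow> nat \<Rightarrow> 'a \<Rightarrow> real"
    and \<rho> :: "nat \<Rightarrow> real"
    and \<rho>0 A_min \<delta> \<gamma> :: real
  assumes prob: "\<And>n. prob_space (M n)"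
    and indep: "\<And>n. prob_space.indep_vars (M n) (\<lambda>_. borel)
                   (\<lambda>k. case k of Inl i \<Rightarrow> A n i | Inr i \<Rightarrow> B n i) (UNIV :: (nat + nat) set)"
    and A_id: "\<And>n i. distr (M n) borel (A n i) = distr (M n) borel (A n 0)"
    and B_id: "\<And>n i. distr (M n) borel (B n i) = distr (M n) borel (B n 0)"
    and A_pos: "\<And>n i \<omega>. \<omega> \<in> space (M n) \<Longrightarrow> A n i \<omega> > 0"
    and B_pos: "\<And>n i \<omega>. \<omega> \<in> space (M n) \<Longrightarrow> B n i \<omega> > 0"
    and A_int: "\<And>n. integrable (M n) (A n 0)"
    and B_int: "\<And>n. integrable (M n) (B n 0)"
    and rho_def: "\<And>n. \<rho> n = prob_space.expectation (M n) (B n 0) / prob_space.expectation (M n) (A n 0)"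
    and rho0: "0 < \<rho>0" "\<rho>0 < 1"
    and Amin: "A_min > 0"
    and bounds: "\<And>n. \<rho>0 * A_min \<le> \<rho>0 * prob_space.expectation (M n) (A n 0)"
                "\<And>n. \<rho>0 * prob_space.expectation (M n) (A n 0) \<le> prob_space.expectation (M n) (B n 0)"
                "\<And>n. prob_space.expectation (M n) (B n 0) < prob_space.expectation (M n) (A n 0)"
    and rho_lim: "\<rho> \<longlonglongrightarrow> 1"
    and A_var: "\<And>n. integrable (M n) (\<lambda>\<omega>. (A n 0 \<omega>)\<^sup>2)"
    and A_sq_bdd: "limsup (\<lambda>n. ereal (prob_space.expectation (M n) (\<lambda>\<omega>. (A n 0 \<omega>)\<^sup>2))) < \<infinity>"
    and \<delta>\<gamma>: "\<delta> > 0" "\<gamma> > 0"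
    and jump: "\<And>n. prob_space.prob (M n) {\<omega> \<in> space (M n). B n 0 \<omega> - A n 0 \<omega> \<ge> \<delta>} \<ge> \<gamma>"
  shows "(\<exists>c C. 0 < c \<and> c \<le> C \<and> (\<forall>\<^sub>F n in sequentially.
             ennreal c \<le> ennreal (1 - \<rho> n) * (\<integral>\<^sup>+ \<omega>. ennreal_of_enat (busy_jobs (A n) (B n) \<omega>) \<partial>M n)
           \<and> ennreal (1 - \<rho> n) * (\<integral>\<^sup>+ \<omega>. ennreal_of_enat (busy_jobs (A n) (B n) \<omega>) \<partial>M n) \<le> ennreal C))
    \<and> (\<exists>c C. 0 < c \<and> c \<le> C \<and> (\<forall>\<^sub>F n in sequentially.
             ennreal c \<le> (\<integral>\<^sup>+ \<omega>. ennreal (idle_time (A n) (B n) \<omega>) \<partial>M n)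
           \<and> (\<integral>\<^sup>+ \<omega>. ennreal (idle_time (A n) (B n) \<omega>) \<partial>M n) \<le> ennreal C))"
proof -
  have Q: "queue (M n) (A n) (B n) \<delta> \<gamma>" for n
  proof (intro queue.intro queue_axioms.intro)
    show "prob_space (M n)" by (rule prob)
    interpret prob_space "M n" by (rule prob)
    show "indep_vars (\<lambda>_. borel) (\<lambda>k. case k of Inl i \<Rightarrow> A n i | Inr i \<Rightarrow> B n i) UNIV" by (rule indep)
    show "measure (M n) {\<omega> \<in> space (M n). \<delta> \<le> B n 0 \<omega> - A n 0 \<omega>} \<ge> \<gamma>" by (rule jump)
    show "expectation (B n 0) < expectation (A n 0)" by (rule bounds(3))
  qed (use A_id B_id A_pos B_pos A_int B_int A_var \<delta>\<gamma> in auto)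
  let ?EA = "\<lambda>n. integral\<^sup>L (M n) (A n 0)"
  let ?EB = "\<lambda>n. integral\<^sup>L (M n) (B n 0)"
  let ?E2 = "\<lambda>n. integral\<^sup>L (M n) (\<lambda>\<omega>. (A n 0 \<omega>)\<^sup>2)"
  let ?EN = "\<lambda>n. \<integral>\<^sup>+ \<omega>. ennreal_of_enat (busy_jobs (A n) (B n) \<omega>) \<partial>M n"
  let ?EI = "\<lambda>n. \<integral>\<^sup>+ \<omega>. ennreal (idle_time (A n) (B n) \<omega>) \<partial>M n"
  obtain r where r: "limsup (\<lambda>n. ereal (?E2 n)) < ereal r"
  proof (cases "limsup (\<lambda>n. ereal (?E2 n))")
    case (real x) then show ?thesis using that[of "x + 1"] by simp
  next
    case PInf then show ?thesis using A_sq_bdd by simp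
  next
    case MInf then show ?thesis using that[of 0] by simp
  qed
  have ev: "\<forall>\<^sub>F n in sequentially. ?E2 n < r"
    using Limsup_lessD[OF r] by simp
  have EAmin: "A_min \<le> ?EA n" for n using bounds(1)[of n] rho0 by simp
  have EA_le: "?EA n \<le> 1 + ?E2 n" for n
  proof -
    interpret prob_space "M n" by (rule prob)
    have "?EA n \<le> (\<integral>\<omega>. 1 + (A n 0 \<omega>)\<^sup>2 \<partial>M n)"
    proof (rule integral_mono)
      show "integrable (M n) (A n 0)" by (rule A_int)
      show "integrable (M n) (\<lambda>\<omega>. 1 + (A n 0 \<omega>)\<^sup>2)" using A_var by simp
      fix \<omega>
      have h: "0 \<le> (A n 0 \<omega> - 1/2) * (A n 0 \<omega> - 1/2)" by simp
      have "(A n 0 \<omega> - 1/2) * (A n 0 \<omega> - 1/2) = (A n 0 \<omega>)\<^sup>2 - A n 0 \<omega> + 1/4"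
        by (simp add: power2_eq_square algebra_simps)
      then show "A n 0 \<omega> \<le> 1 + (A n 0 \<omega>)\<^sup>2" using h by linarith
    qed
    also have "\<dots> = 1 + ?E2 n" using A_var by (simp add: prob_space)
    finally show ?thesis .
  qed
  have EA_pos: "0 < ?EA n" for n using EAmin[of n] Amin by simp
  have r0: "0 \<le> r" if "?E2 n < r" for n
  proof -
    interpret prob_space "M n" by (rule prob)
    have "0 \<le> ?E2 n" by (intro integral_nonneg_AE AE_I2) simp
    then show ?thesis using that by linarith
  qed
  define CI where "CI = (1/\<gamma>) * (r/\<delta> + (1 + r))"
  have Iup: "?EI n \<le> ennreal CI" if "?E2 n < r" for n
  proof -
    have "?EI n \<le> ennreal (1/\<gamma>) * ennreal (?E2 n / \<delta> + ?EA n)" by (rule queue.I_upper[OF Q])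
    also have "\<dots> \<le> ennreal (1/\<gamma>) * ennreal (r/\<delta> + (1 + r))"
    proof (intro mult_left_mono ennreal_leI)
      have "?E2 n / \<delta> \<le> r / \<delta>" using that \<delta>\<gamma> by (simp add: divide_right_mono)
      then show "?E2 n / \<delta> + ?EA n \<le> r / \<delta> + (1 + r)" using EA_le[of n] that by linarith
    qed simp
    also have "\<dots> = ennreal CI" unfolding CI_def using \<delta>\<gamma> r0[OF that]
      by (subst ennreal_mult[symmetric]) (auto intro!: add_nonneg_nonneg)
    finally show ?thesis .
  qed
  have Ilow: "ennreal (\<delta> * \<gamma>) \<le> ?EI n" for n by (rule queue.I_lower[OF Q])
  have Neq: "ennreal (1 - \<rho> n) * ?EN n = ennreal (1 / ?EA n) * ?EI n" for n
  proof -
    have "1 - \<rho> n = (?EA n - ?EB n) / ?EA n" using rho_def[of n] EA_pos[of n] by (simp add: field_simps)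
    then show ?thesis using queue.final_N[OF Q, of n] by simp
  qed
  have ev_r: "\<exists>n. ?E2 n < r" using eventually_happens[OF ev] by simp
  then obtain n0 where "?E2 n0 < r" by blast
  then have r0': "0 \<le> r" by (rule r0)
  have CI_ge: "\<delta> * \<gamma> \<le> CI"
  proof -
    have "ennreal (\<delta> * \<gamma>) \<le> ennreal CI" using Ilow[of n0] Iup[OF \<open>?E2 n0 < r\<close>] by (rule order.trans)
    moreover have "0 \<le> CI" unfolding CI_def using \<delta>\<gamma> r0' by simp
    ultimately show ?thesis by (simp add: ennreal_le_iff)
  qed
  show ?thesis
  proof (intro conjI)
    show "\<exists>c C. 0 < c \<and> c \<le> C \<and> (\<forall>\<^sub>F n in sequentially. ennreal c \<le> ennreal (1 - \<rho> n) * ?EN n \<and> ennreal (1 - \<rho> n) * ?EN n \<le> ennreal C)"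
    proof (intro exI conjI)
      show "0 < \<delta> * \<gamma> / (1 + r)" using \<delta>\<gamma> r0' by simp
      show "\<delta> * \<gamma> / (1 + r) \<le> max (\<delta> * \<gamma> / (1 + r)) (CI / A_min)" by simp
      show "\<forall>\<^sub>F n in sequentially. ennreal (\<delta> * \<gamma> / (1 + r)) \<le> ennreal (1 - \<rho> n) * ?EN n \<and> ennreal (1 - \<rho> n) * ?EN n \<le> ennreal (max (\<delta> * \<gamma> / (1 + r)) (CI / A_min))"
        using ev
      proof eventually_elim
        case (elim n)
        have e1: "1 / (1 + r) \<le> 1 / ?EA n" using EA_pos[of n] EA_le[of n] elim by (intro divide_left_mono) auto
        have e2: "1 / ?EA n \<le> 1 / A_min" using EAmin[of n] Amin by (intro divide_left_mono) auto
        have "ennreal (\<delta> * \<gamma> / (1 + r)) = ennreal (1 / (1 + r)) * ennreal (\<delta> * \<gamma>)"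
          using r0' \<delta>\<gamma> by (simp add: ennreal_mult[symmetric])
        also have "\<dots> \<le> ennreal (1 / ?EA n) * ?EI n"
          by (intro mult_mono ennreal_leI e1 Ilow) auto
        finally have lo: "ennreal (\<delta> * \<gamma> / (1 + r)) \<le> ennreal (1 - \<rho> n) * ?EN n" by (simp add: Neq)
        have "ennreal (1 - \<rho> n) * ?EN n = ennreal (1 / ?EA n) * ?EI n" by (rule Neq)
        also have "\<dots> \<le> ennreal (1 / A_min) * ennreal CI"
          by (intro mult_mono ennreal_leI e2 Iup elim) auto
        also have "\<dots> = ennreal (CI / A_min)"
        proof -
          have "0 \<le> CI" using CI_ge \<delta>\<gamma> by (smt (verit) mult_pos_pos)
          then show ?thesis using Amin by (subst ennreal_mult[symmetric]) auto
        qed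
        also have "\<dots> \<le> ennreal (max (\<delta> * \<gamma> / (1 + r)) (CI / A_min))" by (intro ennreal_leI) simp
        finally show ?case using lo by simp
      qed
    qed
    show "\<exists>c C. 0 < c \<and> c \<le> C \<and> (\<forall>\<^sub>F n in sequentially. ennreal c \<le> ?EI n \<and> ?EI n \<le> ennreal C)"
    proof (intro exI conjI)
      show "0 < \<delta> * \<gamma>" using \<delta>\<gamma> by simp
      show "\<delta> * \<gamma> \<le> CI" by (rule CI_ge)
      show "\<forall>\<^sub>F n in sequentially. ennreal (\<delta> * \<gamma>) \<le> ?EI n \<and> ?EI n \<le> ennreal CI"
        using ev by eventually_elim (use Ilow Iup in auto)
    qed
  qed
qed

end
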